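(* Let $\mathbb{K}$ be a field, $n>1$, $a=\sum_{j=0}^d c_j s^j\in\mathbb{K}[s]^n$ a non-zero row vector of degree $d$, and $A\in\mathbb{K}^{(2d+1)\times n(d+1)}$ the matrix whose $(i,\,kn+r)$ entry ($1\le i\le 2d+1$, $0\le k\le d$, $1\le r\le n$) is the $r$-th entry of $c_{i-1-k}$ (zero if $i-1-k\notin\{0,\dots,d\}$). Let $q$ be the set of non-pivotal indices of $A$. If $j\in q$, then $j+kn\in q$ for all integers $0\le k\le\left\lfloor\frac{n(d+1)-j}{n}\right\rfloor$. Moreover, if $A_{*j}=\sum_{r<j}\alpha_r A_{*r}$ with $\alpha_r\in\mathbb{K}$, then $A_{*j+kn}=\sum_{r<j}\alpha_r A_{*r+kn}$ for all such $k$.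
   Context: $A_{*j}$ denotes the $j$-th column of $A$. A column of a matrix is called pivotal if it is either the first column and non-zero, or it is linearly independent of all previous columns; the other columns are non-pivotal, and their indices are the non-pivotal indices. *)

theory Defs
  imports "HOL-Computational_Algebra.Polynomial"
begin

text \<open>A row vector a in K[s]^n is a list of n polynomials; its degree is the
maximal degree of its entries.  All row/column indices below are 1-based,
as in the paper.\<close>

definition row_degree :: "'a::zero poly list \<Rightarrow> nat" where
  "row_degree a = Max (degree ` set a)"

definition coeff_matrix :: "'a::zero poly list \<Rightarrow> nat \<Rightarrow> nat \<Rightarrow> 'a" where
  "coeff_matrix a i col =
     (let n = length a; d = row_degree a;
          k = (col - 1) div n; r = (col - 1) mod n + 1
      in if k + 1 \<le> i \<and> i - 1 - k \<le> d then coeff (a ! (r - 1)) (i - 1 - k) else 0)"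

definition in_span_prev :: "nat \<Rightarrow> (nat \<Rightarrow> nat \<Rightarrow> 'a::field) \<Rightarrow> nat \<Rightarrow> bool" where
  "in_span_prev m M j =
     (\<exists>\<alpha>::nat \<Rightarrow> 'a. \<forall>i\<in>{1..m}. M i j = (\<Sum>r=1..<j. \<alpha> r * M i r))"

definition pivotal :: "nat \<Rightarrow> (nat \<Rightarrow> nat \<Rightarrow> 'a::field) \<Rightarrow> nat \<Rightarrow> bool" where
  "pivotal m M j =
     ((j = 1 \<and> (\<exists>i\<in>{1..m}. M i 1 \<noteq> 0)) \<or> (j > 1 \<and> \<not> in_span_prev m M j))"

definition nonpivotal_indices :: "nat \<Rightarrow> nat \<Rightarrow> (nat \<Rightarrow> nat \<Rightarrow> 'a::field) \<Rightarrow> nat set" where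
  "nonpivotal_indices m N M = {j \<in> {1..N}. \<not> pivotal m M j}"

end

theory Submission
  imports Defs
begin

lemma shift_col:
  fixes a :: "'a::field poly list"
  assumes "length a > 0" "col \<ge> 1"
  shows "coeff_matrix a i (col + k * length a) =
         (if k < i then coeff_matrix a (i - k) col else 0)"
proof -
  let ?n = "length a"
  have e: "col + k * ?n - 1 = (col - 1) + k * ?n" using assms by simp
  have dv: "(col + k * ?n - 1) div ?n = (col - 1) div ?n + k" using assms(1) unfolding e by simp
  have md: "(col + k * ?n - 1) mod ?n = (col - 1) mod ?n" unfolding e by simp
  show ?thesis
    unfolding coeff_matrix_def Let_def dv md
    by (auto simp: algebra_simps)
qed

lemma part2:
  fixes a :: "'a::field poly list" and n d :: nat
  assumes "n = length a" "n > 0" "j \<ge> 1"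
    and h: "\<forall>i\<in>{1..2*d+1}. coeff_matrix a i j = (\<Sum>r=1..<j. \<alpha> r * coeff_matrix a i r)"
  shows "\<forall>i\<in>{1..2*d+1}. coeff_matrix a i (j + k*n)
                   = (\<Sum>r=1..<j. \<alpha> r * coeff_matrix a i (r + k*n))"
proof
  fix i assume i: "i \<in> {1..2*d+1}"
  show "coeff_matrix a i (j + k*n) = (\<Sum>r=1..<j. \<alpha> r * coeff_matrix a i (r + k*n))"
  proof (cases "k < i")
    case True
    have "coeff_matrix a i (j + k*n) = coeff_matrix a (i-k) j"
      using shift_col[of a j i k] assms True by simp
    also have "\<dots> = (\<Sum>r=1..<j. \<alpha> r * coeff_matrix a (i-k) r)"
      using h i True by (intro bspec[OF h]) auto
    also have "\<dots> = (\<Sum>r=1..<j. \<alpha> r * coeff_matrix a i (r + k*n))"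
      by (rule sum.cong) (use shift_col[of a _ i k] assms True in auto)
    finally show ?thesis .
  next
    case False
    have "coeff_matrix a i (j + k*n) = 0"
      using shift_col[of a j i k] assms False by simp
    moreover have "(\<Sum>r=1..<j. \<alpha> r * coeff_matrix a i (r + k*n)) = 0"
      by (rule sum.neutral) (use shift_col[of a _ i k] assms False in auto)
    ultimately show ?thesis by simp
  qed
qed

lemma reidx:
  fixes f :: "nat \<Rightarrow> 'a::field"
  shows "(\<Sum>r=1..<j. \<alpha> r * f (r + m)) =
         (\<Sum>r=1..<j+m. (if m < r then \<alpha> (r - m) else 0) * f r)"
proof -
  let ?b = "\<lambda>r. (if m < r then \<alpha> (r - m) else 0) * f r"
  have "(\<Sum>r=1..<j. \<alpha> r * f (r + m)) = (\<Sum>r=1..<j. ?b (r + m))"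
    by (rule sum.cong) auto
  also have "\<dots> = sum ?b ((\<lambda>r. r + m) ` {1..<j})"
    by (subst sum.reindex) (auto simp: inj_on_def)
  also have "\<dots> = sum ?b {1..<j+m}"
  proof (rule sum.mono_neutral_left)
    show "\<forall>i\<in>{1..<j + m} - (\<lambda>r. r + m) ` {1..<j}. ?b i = 0"
    proof
      fix i assume i: "i \<in> {1..<j + m} - (\<lambda>r. r + m) ` {1..<j}"
      show "?b i = 0"
      proof (cases "m < i")
        case True
        hence "i = (i - m) + m" "i - m \<in> {1..<j}" using i by auto
        hence "i \<in> (\<lambda>r. r + m) ` {1..<j}" by (metis imageI)
        then show ?thesis using i by auto
      qed simp
    qed
  qed auto
  finally show ?thesis .
qed

theorem lemma6:
  fixes a :: "'a::field poly list" and n d :: nat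
  assumes "n = length a" and "n > 1"
    and "\<exists>p\<in>set a. p \<noteq> 0"
    and "d = row_degree a"
  shows "(\<forall>j \<in> nonpivotal_indices (2*d+1) (n*(d+1)) (coeff_matrix a).
            \<forall>k::nat. k \<le> (n*(d+1) - j) div n \<longrightarrow>
              j + k*n \<in> nonpivotal_indices (2*d+1) (n*(d+1)) (coeff_matrix a))
       \<and> (\<forall>j (\<alpha>::nat \<Rightarrow> 'a). j \<in> {1..n*(d+1)} \<longrightarrow>
            (\<forall>i\<in>{1..2*d+1}. coeff_matrix a i j = (\<Sum>r=1..<j. \<alpha> r * coeff_matrix a i r)) \<longrightarrow>
            (\<forall>k::nat. k \<le> (n*(d+1) - j) div n \<longrightarrow>
              (\<forall>i\<in>{1..2*d+1}. coeff_matrix a i (j + k*n)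
                   = (\<Sum>r=1..<j. \<alpha> r * coeff_matrix a i (r + k*n)))))"
proof (intro conjI)
  show P2: "\<forall>j (\<alpha>::nat \<Rightarrow> 'a). j \<in> {1..n*(d+1)} \<longrightarrow>
            (\<forall>i\<in>{1..2*d+1}. coeff_matrix a i j = (\<Sum>r=1..<j. \<alpha> r * coeff_matrix a i r)) \<longrightarrow>
            (\<forall>k::nat. k \<le> (n*(d+1) - j) div n \<longrightarrow>
              (\<forall>i\<in>{1..2*d+1}. coeff_matrix a i (j + k*n)
                   = (\<Sum>r=1..<j. \<alpha> r * coeff_matrix a i (r + k*n))))"
  proof (intro allI impI)
    fix j and \<alpha> :: "nat \<Rightarrow> 'a" and k
    assume "j \<in> {1..n*(d+1)}" "\<forall>i\<in>{1..2*d+1}. coeff_matrix a i j = (\<Sum>r=1..<j. \<alpha> r * coeff_matrix a i r)"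
    then show "\<forall>i\<in>{1..2*d+1}. coeff_matrix a i (j + k*n)
                   = (\<Sum>r=1..<j. \<alpha> r * coeff_matrix a i (r + k*n))"
      using part2[OF assms(1), of j d \<alpha> k] assms(2) by simp
  qed
  show "\<forall>j \<in> nonpivotal_indices (2*d+1) (n*(d+1)) (coeff_matrix a).
            \<forall>k::nat. k \<le> (n*(d+1) - j) div n \<longrightarrow>
              j + k*n \<in> nonpivotal_indices (2*d+1) (n*(d+1)) (coeff_matrix a)"
  proof (intro ballI allI impI)
    fix j k
    assume j: "j \<in> nonpivotal_indices (2*d+1) (n*(d+1)) (coeff_matrix a)"
      and k: "k \<le> (n*(d+1) - j) div n"
    have j1: "j \<in> {1..n*(d+1)}" and np: "\<not> pivotal (2*d+1) (coeff_matrix a) j"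
      using j unfolding nonpivotal_indices_def by auto
    have "k * n \<le> n*(d+1) - j"
      using order.trans[OF mult_le_mono1[OF k] div_times_less_eq_dividend] .
    hence bnd: "j + k*n \<le> n*(d+1)" using j1 by auto
    obtain \<alpha> :: "nat \<Rightarrow> 'a" where
      h: "\<forall>i\<in>{1..2*d+1}. coeff_matrix a i j = (\<Sum>r=1..<j. \<alpha> r * coeff_matrix a i r)"
    proof (cases "j = 1")
      case True
      then show ?thesis using np that[of "\<lambda>_. 0"] unfolding pivotal_def by auto
    next
      case False
      then show ?thesis using np j1 that unfolding pivotal_def in_span_prev_def by auto
    qed
    show "j + k*n \<in> nonpivotal_indices (2*d+1) (n*(d+1)) (coeff_matrix a)"
    proof (cases "k = 0")
      case True then show ?thesis using j by simp
    next
      case False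
      have gt: "j + k*n > 1" proof -
        have kn: "k*n \<ge> 1" using False assms(2) by (simp add: Suc_le_eq)
        have "j \<ge> 1" using j1 by simp
        with kn show ?thesis by linarith
      qed
      have "\<forall>i\<in>{1..2*d+1}. coeff_matrix a i (j + k*n)
                   = (\<Sum>r=1..<j. \<alpha> r * coeff_matrix a i (r + k*n))"
        using P2 j1 h k by blast
      hence "\<forall>i\<in>{1..2*d+1}. coeff_matrix a i (j + k*n)
                   = (\<Sum>r=1..<j+k*n. (if k*n < r then \<alpha> (r - k*n) else 0) * coeff_matrix a i r)"
        using reidx[of \<alpha> "coeff_matrix a _" "k*n" j] by simp
      hence "in_span_prev (2*d+1) (coeff_matrix a) (j + k*n)"
        unfolding in_span_prev_def by (rule exI[of _ "\<lambda>r. if k*n < r then \<alpha> (r - k*n) else 0"])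
      then show ?thesis using gt bnd unfolding nonpivotal_indices_def pivotal_def by auto
    qed
  qed
qed

end
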